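(* For all integers $d\ge 2$ and $n\ge 1$, the lattice $\Gamma(M_{d,n})$, ordered pointwise ($f\le g$ iff $f(x)\le g(x)$ for all $x\in M_{d,n}$), is distributive if and only if $n\in\{1,2\}$.
   Context: For integers $d\ge 2$, $n\ge 1$, the $(d,n)$-book lattice $M_{d,n}$ is the finite lattice with universe $\{0,1\}\cup\{a_i: 1\le i\le n\}\cup\{b_j:1\le j\le d-2\}$ and order generated by $0<a_i<b_1<b_2<\cdots<b_{d-2}<1$ for each $1\le i\le n$ (the $a_i$ are pairwise incomparable; when $d=2$ there are no $b_j$ and $0<a_i<1$). For a finite lattice $L$, the geometric realization $\Gamma(L)$ is the set of functions $f\colon L\to[0,1]$ such that for every $s\in[0,1]$ the level set $f_s=\{x\in L: f(x)\ge s\}$ is a principal ideal of $L$, topologized as a subspace of $[0,1]^L$. Equivalently, writing $\phi_a$ for the indicator function of the principal ideal $\{x: x\le a\}$, $\Gamma(L)$ consists of the convex combinations $\sum_{a\in C}u_a\phi_a$ over chains $C$ of $L$. The pointwise order on $\Gamma(L)$ is a lattice order, and $\Gamma(L)$ is regarded as a lattice with the induced meet and join. The maps $h_s\colon\Gamma(L)\to L$, $h_s(f)=\bigvee f_s$ ($s\in[0,1]$) are known to be lattice homomorphisms jointly realizing $\Gamma(L)$ as a subdirect power of $L$. *)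

theory Defs
  imports Main "HOL.Real"
begin

text \<open>Elements of the book lattice M_{d,n}: Bot = 0, Top = 1, A i = a_i, B j = b_j.\<close>
datatype melem = Bot | Top | A nat | B nat

definition book_carrier :: "nat \<Rightarrow> nat \<Rightarrow> melem set" where
  "book_carrier d n = {Bot, Top} \<union> {A i | i. 1 \<le> i \<and> i \<le> n} \<union> {B j | j. 1 \<le> j \<and> j + 2 \<le> d}"

text \<open>The order of M_{d,n} (on the carrier): 0 < a_i < b_1 < ... < b_{d-2} < 1.
  For d = 2 there are no b_j and a_i < 1.\<close>
fun book_le :: "melem \<Rightarrow> melem \<Rightarrow> bool" where
  "book_le Bot y = True"
| "book_le x Top = True"
| "book_le (A i) (A j) = (i = j)"
| "book_le (A i) (B j) = True"
| "book_le (B i) (B j) = (i \<le> j)"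
| "book_le _ _ = False"

text \<open>Geometric realization of a finite lattice given by carrier L and order le:
  functions L \<rightarrow> [0,1] (extended by 0 outside L) all of whose level sets
  f_s = {x. f x \<ge> s}, s \<in> [0,1], are principal ideals {x \<in> L. x \<le> a}, a \<in> L.\<close>
definition Gamma :: "'a set \<Rightarrow> ('a \<Rightarrow> 'a \<Rightarrow> bool) \<Rightarrow> ('a \<Rightarrow> real) set" where
  "Gamma L le = {f. (\<forall>x. x \<notin> L \<longrightarrow> f x = 0) \<and> (\<forall>x\<in>L. 0 \<le> f x \<and> f x \<le> 1) \<and>
      (\<forall>s\<in>{0..1}. \<exists>a\<in>L. {x\<in>L. s \<le> f x} = {x\<in>L. le x a})}"

definition pw_le :: "('a \<Rightarrow> real) \<Rightarrow> ('a \<Rightarrow> real) \<Rightarrow> bool" where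
  "pw_le f g = (\<forall>x. f x \<le> g x)"

definition is_lub_in :: "('a \<Rightarrow> real) set \<Rightarrow> ('a \<Rightarrow> real) \<Rightarrow> ('a \<Rightarrow> real) \<Rightarrow> ('a \<Rightarrow> real) \<Rightarrow> bool" where
  "is_lub_in P f g j = (j \<in> P \<and> pw_le f j \<and> pw_le g j \<and> (\<forall>k\<in>P. pw_le f k \<and> pw_le g k \<longrightarrow> pw_le j k))"

definition is_glb_in :: "('a \<Rightarrow> real) set \<Rightarrow> ('a \<Rightarrow> real) \<Rightarrow> ('a \<Rightarrow> real) \<Rightarrow> ('a \<Rightarrow> real) \<Rightarrow> bool" where
  "is_glb_in P f g m = (m \<in> P \<and> pw_le m f \<and> pw_le m g \<and> (\<forall>k\<in>P. pw_le k f \<and> pw_le k g \<longrightarrow> pw_le k m))"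

definition distributive_lattice_pw :: "('a \<Rightarrow> real) set \<Rightarrow> bool" where
  "distributive_lattice_pw P =
    ((\<forall>f\<in>P. \<forall>g\<in>P. (\<exists>j. is_lub_in P f g j) \<and> (\<exists>m. is_glb_in P f g m)) \<and>
     (\<forall>f\<in>P. \<forall>g\<in>P. \<forall>h\<in>P. \<forall>j a b c e.
        is_lub_in P g h j \<and> is_glb_in P f j a \<and> is_glb_in P f g b \<and> is_glb_in P f h c \<and>
        is_lub_in P b c e \<longrightarrow> a = e))"

end

theory Submission
  imports Defs
begin

lemma mem_L[simp]:
  "Bot \<in> book_carrier d n" "Top \<in> book_carrier d n"
  "A i \<in> book_carrier d n \<longleftrightarrow> 1 \<le> i \<and> i \<le> n"
  "B j \<in> book_carrier d n \<longleftrightarrow> 1 \<le> j \<and> j + 2 \<le> d"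
  by (auto simp: book_carrier_def)

lemma le_Top[simp]: "book_le x Top"
  by (cases x) auto

lemma le_Bot: "book_le x Bot \<longleftrightarrow> x = Bot"
  by (cases x) auto

lemma le_trans: "book_le x y \<Longrightarrow> book_le y z \<Longrightarrow> book_le x z"
  by (cases x; cases y; cases z) auto

definition u :: "nat \<Rightarrow> melem" where "u d = (if 3 \<le> d then B 1 else Top)"

fun bsup :: "nat \<Rightarrow> melem \<Rightarrow> melem \<Rightarrow> melem" where
  "bsup d Bot y = y"
| "bsup d x Bot = x"
| "bsup d Top y = Top"
| "bsup d x Top = Top"
| "bsup d (A i) (A j) = (if i = j then A i else u d)"
| "bsup d (A i) (B j) = B j"
| "bsup d (B i) (A j) = B i"
| "bsup d (B i) (B j) = B (max i j)"

fun binf :: "melem \<Rightarrow> melem \<Rightarrow> melem" where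
  "binf Bot y = Bot"
| "binf x Bot = Bot"
| "binf Top y = y"
| "binf x Top = x"
| "binf (A i) (A j) = (if i = j then A i else Bot)"
| "binf (A i) (B j) = A i"
| "binf (B i) (A j) = A j"
| "binf (B i) (B j) = B (min i j)"

lemma u_L: "2 \<le> d \<Longrightarrow> u d \<in> book_carrier d n"
  by (auto simp: u_def)

lemma A_le_u: "book_le (A i) (u d)"
  by (auto simp: u_def)

lemma bsup_L: "2 \<le> d \<Longrightarrow> x \<in> book_carrier d n \<Longrightarrow> y \<in> book_carrier d n \<Longrightarrow> bsup d x y \<in> book_carrier d n"
  by (cases x; cases y) (auto simp: u_def)

lemma bsup_lub: "2 \<le> d \<Longrightarrow> x \<in> book_carrier d n \<Longrightarrow> y \<in> book_carrier d n \<Longrightarrow> z \<in> book_carrier d n \<Longrightarrow>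
   book_le (bsup d x y) z \<longleftrightarrow> book_le x z \<and> book_le y z"
  by (cases x; cases y; cases z) (auto simp: u_def)

lemma u_le_iff: "2 \<le> d \<Longrightarrow> z \<in> book_carrier d n \<Longrightarrow> book_le (u d) z \<longleftrightarrow> book_le (A 1) z \<and> book_le (A 2) z"
  by (cases z) (auto simp: u_def)

lemma bsup_prime: "2 \<le> d \<Longrightarrow> n \<le> 2 \<Longrightarrow> x \<in> book_carrier d n \<Longrightarrow> y \<in> book_carrier d n \<Longrightarrow> z \<in> book_carrier d n \<Longrightarrow>
   (z \<noteq> u d \<or> n = 1) \<Longrightarrow> book_le z (bsup d x y) \<longleftrightarrow> book_le z x \<or> book_le z y"
  by (cases x; cases y; cases z) (auto simp: u_def)

lemma binf_L: "x \<in> book_carrier d n \<Longrightarrow> y \<in> book_carrier d n \<Longrightarrow> binf x y \<in> book_carrier d n"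
  by (cases x; cases y) auto

lemma binf_glb: "x \<in> book_carrier d n \<Longrightarrow> y \<in> book_carrier d n \<Longrightarrow> z \<in> book_carrier d n \<Longrightarrow>
   book_le z (binf x y) \<longleftrightarrow> book_le z x \<and> book_le z y"
  by (cases x; cases y; cases z) auto

abbreviation "LL d n \<equiv> book_carrier d n"
abbreviation "GG d n \<equiv> Gamma (book_carrier d n) book_le"

lemma G_out: "f \<in> Gamma L le \<Longrightarrow> x \<notin> L \<Longrightarrow> f x = 0"
  by (auto simp: Gamma_def)
lemma G_rng: "f \<in> Gamma L le \<Longrightarrow> x \<in> L \<Longrightarrow> 0 \<le> f x \<and> f x \<le> 1"
  by (auto simp: Gamma_def)
lemma G_lvl: "f \<in> Gamma L le \<Longrightarrow> 0 \<le> s \<Longrightarrow> s \<le> 1 \<Longrightarrow> \<exists>a\<in>L. \<forall>x\<in>L. s \<le> f x \<longleftrightarrow> le x a"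
proof -
  assume "f \<in> Gamma L le" "0 \<le> s" "s \<le> 1"
  then have "\<forall>s\<in>{0..1}. \<exists>a\<in>L. {x\<in>L. s \<le> f x} = {x\<in>L. le x a}" by (simp add: Gamma_def)
  then have "\<exists>a\<in>L. {x\<in>L. s \<le> f x} = {x\<in>L. le x a}" using \<open>0 \<le> s\<close> \<open>s \<le> 1\<close> by auto
  then obtain a where "a \<in> L" "{x\<in>L. s \<le> f x} = {x\<in>L. le x a}" by blast
  then show ?thesis by blast
qed
lemma G_intro: "(\<forall>x. x \<notin> L \<longrightarrow> f x = 0) \<Longrightarrow> (\<forall>x\<in>L. 0 \<le> f x \<and> f x \<le> 1) \<Longrightarrow>
   (\<And>s. 0 \<le> s \<Longrightarrow> s \<le> 1 \<Longrightarrow> \<exists>a\<in>L. \<forall>x\<in>L. s \<le> f x \<longleftrightarrow> le x a) \<Longrightarrow> f \<in> Gamma L le"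
proof -
  assume h: "\<And>s. 0 \<le> s \<Longrightarrow> s \<le> 1 \<Longrightarrow> \<exists>a\<in>L. \<forall>x\<in>L. s \<le> f x \<longleftrightarrow> le x a"
    "\<forall>x. x \<notin> L \<longrightarrow> f x = 0" "\<forall>x\<in>L. 0 \<le> f x \<and> f x \<le> 1"
  have "\<forall>s\<in>{0..1}. \<exists>a\<in>L. {x\<in>L. s \<le> f x} = {x\<in>L. le x a}"
  proof
    fix s :: real assume "s \<in> {0..1}"
    then obtain a where "a \<in> L" "\<forall>x\<in>L. s \<le> f x \<longleftrightarrow> le x a" using h(1) by auto
    then show "\<exists>a\<in>L. {x\<in>L. s \<le> f x} = {x\<in>L. le x a}" by blast
  qed
  then show ?thesis using h unfolding Gamma_def by blast
qed

lemma G_anti: assumes "f \<in> GG d n" "x \<in> LL d n" "y \<in> LL d n" "book_le x y" shows "f y \<le> f x"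
proof -
  have "0 \<le> f y" "f y \<le> 1" using G_rng[OF assms(1) assms(3)] by auto
  from G_lvl[OF assms(1) this] obtain a where a: "a \<in> LL d n" "\<forall>z\<in>LL d n. f y \<le> f z \<longleftrightarrow> book_le z a"
    by blast
  then have "book_le y a" using assms(3) by blast
  then have "book_le x a" using assms(4) le_trans by blast
  then show ?thesis using a assms(2) by blast
qed

lemma G_u: assumes "f \<in> GG d n" "2 \<le> d" "n = 2" shows "f (u d) = min (f (A 1)) (f (A 2))"
proof -
  have L: "A 1 \<in> LL d n" "A 2 \<in> LL d n" "u d \<in> LL d n" using assms u_L by auto
  have le1: "f (u d) \<le> f (A 1)" "f (u d) \<le> f (A 2)"
    using G_anti[OF assms(1) L(1) L(3)] G_anti[OF assms(1) L(2) L(3)] A_le_u by blast+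
  have "0 \<le> min (f (A 1)) (f (A 2))" "min (f (A 1)) (f (A 2)) \<le> 1"
    using G_rng[OF assms(1) L(1)] G_rng[OF assms(1) L(2)] by auto
  from G_lvl[OF assms(1) this] obtain a where a: "a \<in> LL d n" "\<forall>z\<in>LL d n. min (f (A 1)) (f (A 2)) \<le> f z \<longleftrightarrow> book_le z a"
    by blast
  moreover have "min (f (A 1)) (f (A 2)) \<le> f (A 1)" "min (f (A 1)) (f (A 2)) \<le> f (A 2)" by simp_all
  ultimately have "book_le (A 1) a" "book_le (A 2) a" using L(1,2) by blast+
  then have "book_le (u d) a" using u_le_iff[OF assms(2) a(1)] by auto
  then have "min (f (A 1)) (f (A 2)) \<le> f (u d)" using a L by blast
  with le1 show ?thesis by linarith
qed


definition JJ :: "nat \<Rightarrow> nat \<Rightarrow> (melem \<Rightarrow> real) \<Rightarrow> (melem \<Rightarrow> real) \<Rightarrow> melem \<Rightarrow> real" where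
  "JJ d n f g x = (if n = 2 \<and> x = u d then min (max (f (A 1)) (g (A 1))) (max (f (A 2)) (g (A 2)))
                   else max (f x) (g x))"

definition MM :: "(melem \<Rightarrow> real) \<Rightarrow> (melem \<Rightarrow> real) \<Rightarrow> melem \<Rightarrow> real" where
  "MM f g x = min (f x) (g x)"

lemma MM_G: assumes "f \<in> GG d n" "g \<in> GG d n" shows "MM f g \<in> GG d n"
proof (rule G_intro)
  show "\<forall>x. x \<notin> LL d n \<longrightarrow> MM f g x = 0" using G_out[OF assms(1)] G_out[OF assms(2)] by (simp add: MM_def)
  show "\<forall>x\<in>LL d n. 0 \<le> MM f g x \<and> MM f g x \<le> 1" using G_rng assms unfolding MM_def
    by (metis min.coboundedI1 min_def)
  fix s :: real assume s: "0 \<le> s" "s \<le> 1"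
  obtain a where a: "a \<in> LL d n" "\<forall>x\<in>LL d n. s \<le> f x \<longleftrightarrow> book_le x a" using G_lvl[OF assms(1) s] by blast
  obtain b where b: "b \<in> LL d n" "\<forall>x\<in>LL d n. s \<le> g x \<longleftrightarrow> book_le x b" using G_lvl[OF assms(2) s] by blast
  show "\<exists>c\<in>LL d n. \<forall>x\<in>LL d n. s \<le> MM f g x \<longleftrightarrow> book_le x c"
  proof (intro bexI ballI)
    show "binf a b \<in> LL d n" using binf_L a b by blast
    fix x assume x: "x \<in> LL d n"
    show "s \<le> MM f g x \<longleftrightarrow> book_le x (binf a b)"
      using binf_glb[OF a(1) b(1) x] a(2) b(2) x by (auto simp: MM_def simp del: mem_L)
  qed
qed

lemma JJ_G: assumes "f \<in> GG d n" "g \<in> GG d n" "2 \<le> d" "1 \<le> n" "n \<le> 2" shows "JJ d n f g \<in> GG d n"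
proof (rule G_intro)
  have uL: "u d \<in> LL d n" using u_L assms by blast
  show "\<forall>x. x \<notin> LL d n \<longrightarrow> JJ d n f g x = 0" using G_out[OF assms(1)] G_out[OF assms(2)] uL by (auto simp: JJ_def)
  have A12: "n = 2 \<Longrightarrow> A 1 \<in> LL d n \<and> A 2 \<in> LL d n" by simp
  show "\<forall>x\<in>LL d n. 0 \<le> JJ d n f g x \<and> JJ d n f g x \<le> 1"
  proof
    fix x assume x: "x \<in> LL d n"
    show "0 \<le> JJ d n f g x \<and> JJ d n f g x \<le> 1"
    proof (cases "n = 2 \<and> x = u d")
      case True
      then have "A 1 \<in> LL d n" "A 2 \<in> LL d n" using A12 by auto
      then have "0 \<le> f (A 1) \<and> f (A 1) \<le> 1" "0 \<le> f (A 2) \<and> f (A 2) \<le> 1"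
        "0 \<le> g (A 1) \<and> g (A 1) \<le> 1" "0 \<le> g (A 2) \<and> g (A 2) \<le> 1"
        using G_rng[OF assms(1)] G_rng[OF assms(2)] by blast+
      then show ?thesis using True by (auto simp: JJ_def simp del: mem_L)
    next
      case False
      then show ?thesis using G_rng[OF assms(1) x] G_rng[OF assms(2) x] by (auto simp: JJ_def)
    qed
  qed
  fix s :: real assume s: "0 \<le> s" "s \<le> 1"
  obtain a where a: "a \<in> LL d n" "\<forall>x\<in>LL d n. s \<le> f x \<longleftrightarrow> book_le x a" using G_lvl[OF assms(1) s] by blast
  obtain b where b: "b \<in> LL d n" "\<forall>x\<in>LL d n. s \<le> g x \<longleftrightarrow> book_le x b" using G_lvl[OF assms(2) s] by blast
  show "\<exists>c\<in>LL d n. \<forall>x\<in>LL d n. s \<le> JJ d n f g x \<longleftrightarrow> book_le x c"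
  proof (intro bexI ballI)
    show "bsup d a b \<in> LL d n" using bsup_L a b assms by blast
    fix x assume x: "x \<in> LL d n"
    show "s \<le> JJ d n f g x \<longleftrightarrow> book_le x (bsup d a b)"
    proof (cases "n = 2 \<and> x = u d")
      case True
      have A1: "A 1 \<in> LL d n" "A 2 \<in> LL d n" "A 1 \<noteq> u d" "A 2 \<noteq> u d" using True by (auto simp: u_def)
      have p1: "book_le (A 1) (bsup d a b) \<longleftrightarrow> book_le (A 1) a \<or> book_le (A 1) b"
        using bsup_prime[OF assms(3) assms(5) a(1) b(1) A1(1)] A1 by blast
      have p2: "book_le (A 2) (bsup d a b) \<longleftrightarrow> book_le (A 2) a \<or> book_le (A 2) b"
        using bsup_prime[OF assms(3) assms(5) a(1) b(1) A1(2)] A1 by blast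
      have q: "book_le (u d) (bsup d a b) \<longleftrightarrow> book_le (A 1) (bsup d a b) \<and> book_le (A 2) (bsup d a b)"
        using u_le_iff[OF assms(3) bsup_L[OF assms(3) a(1) b(1)]] by blast
      have "s \<le> JJ d n f g x \<longleftrightarrow> (s \<le> f (A 1) \<or> s \<le> g (A 1)) \<and> (s \<le> f (A 2) \<or> s \<le> g (A 2))"
        using True by (auto simp: JJ_def)
      also have "\<dots> \<longleftrightarrow> (book_le (A 1) a \<or> book_le (A 1) b) \<and> (book_le (A 2) a \<or> book_le (A 2) b)"
        using a(2) b(2) A1 by (auto simp del: mem_L)
      finally show ?thesis using p1 p2 q True by blast
    next
      case False
      then have "x \<noteq> u d \<or> n = 1" using assms by auto
      from bsup_prime[OF assms(3) assms(5) a(1) b(1) x this]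
      have "book_le x (bsup d a b) \<longleftrightarrow> s \<le> f x \<or> s \<le> g x" using a(2) b(2) x by blast
      moreover have "JJ d n f g x = max (f x) (g x)" using False unfolding JJ_def by auto
      ultimately show ?thesis by (simp add: le_max_iff_disj)
    qed
  qed
qed

lemma JJ_lub: assumes "f \<in> GG d n" "g \<in> GG d n" "2 \<le> d" "1 \<le> n" "n \<le> 2"
  shows "is_lub_in (GG d n) f g (JJ d n f g)"
  unfolding is_lub_in_def
proof (intro conjI ballI impI)
  show "JJ d n f g \<in> GG d n" using JJ_G assms by blast
  show "pw_le f (JJ d n f g)" unfolding pw_le_def JJ_def
    using G_u[OF assms(1) assms(3)] by auto
  show "pw_le g (JJ d n f g)" unfolding pw_le_def JJ_def
    using G_u[OF assms(2) assms(3)] by auto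
  fix k assume k: "k \<in> GG d n" "pw_le f k \<and> pw_le g k"
  show "pw_le (JJ d n f g) k" unfolding pw_le_def JJ_def
    using G_u[OF k(1) assms(3)] k(2) unfolding pw_le_def
    by (auto simp: min_le_iff_disj)
qed

lemma MM_glb: assumes "f \<in> GG d n" "g \<in> GG d n" shows "is_glb_in (GG d n) f g (MM f g)"
  using MM_G[OF assms] unfolding is_glb_in_def pw_le_def MM_def by auto

lemma lub_unique: "is_lub_in P f g j \<Longrightarrow> is_lub_in P f g j' \<Longrightarrow> j = j'"
  unfolding is_lub_in_def pw_le_def by (intro ext) (meson order_antisym)

lemma glb_unique: "is_glb_in P f g j \<Longrightarrow> is_glb_in P f g j' \<Longrightarrow> j = j'"
  unfolding is_glb_in_def pw_le_def by (intro ext) (meson order_antisym)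


lemma mm_distr: "max (min (p::real) r) (min p s) = min p (max r s)"
  by (auto simp: min_def max_def)

lemma distrib_small: assumes "2 \<le> d" "1 \<le> n" "n \<le> 2"
  shows "distributive_lattice_pw (GG d n)"
  unfolding distributive_lattice_pw_def
proof (intro conjI ballI allI impI)
  fix f g assume "f \<in> GG d n" "g \<in> GG d n"
  then show "\<exists>j. is_lub_in (GG d n) f g j" "\<exists>m. is_glb_in (GG d n) f g m"
    using JJ_lub[of f d n g] MM_glb[of f d n g] assms by blast+
next
  fix f g h j a b c e
  assume P: "f \<in> GG d n" "g \<in> GG d n" "h \<in> GG d n"
  assume H: "is_lub_in (GG d n) g h j \<and> is_glb_in (GG d n) f j a \<and> is_glb_in (GG d n) f g b \<and>
    is_glb_in (GG d n) f h c \<and> is_lub_in (GG d n) b c e"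
  have H1: "is_lub_in (GG d n) g h j" and H2: "is_glb_in (GG d n) f j a"
    and H3: "is_glb_in (GG d n) f g b" and H4: "is_glb_in (GG d n) f h c"
    and H5: "is_lub_in (GG d n) b c e" using H by simp_all
  have j: "j = JJ d n g h" using lub_unique[OF H1 JJ_lub[OF P(2,3) assms]] .
  have jG: "j \<in> GG d n" using H1 by (simp add: is_lub_in_def)
  have a: "a = MM f j" using glb_unique[OF H2 MM_glb[OF P(1) jG]] .
  have b: "b = MM f g" using glb_unique[OF H3 MM_glb[OF P(1,2)]] .
  have c: "c = MM f h" using glb_unique[OF H4 MM_glb[OF P(1,3)]] .
  have bG: "b \<in> GG d n" "c \<in> GG d n" using H3 H4 by (auto simp: is_glb_in_def)
  have e: "e = JJ d n b c" using lub_unique[OF H5 JJ_lub[OF bG assms]] .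
  show "a = e"
  proof
    fix x
    show "a x = e x"
    proof (cases "n = 2 \<and> x = u d")
      case True
      have fu: "f (u d) = min (f (A 1)) (f (A 2))" using G_u[OF P(1) assms(1)] True by blast
      have ax: "a x = min (f (u d)) (min (max (g (A 1)) (h (A 1))) (max (g (A 2)) (h (A 2))))"
        using True unfolding a j MM_def JJ_def by simp
      have ex: "e x = min (max (min (f (A 1)) (g (A 1))) (min (f (A 1)) (h (A 1))))
                          (max (min (f (A 2)) (g (A 2))) (min (f (A 2)) (h (A 2))))"
        using True unfolding e b c MM_def JJ_def by simp
      show ?thesis unfolding ax ex fu mm_distr by (simp add: ac_simps)
    next
      case False
      have ax: "a x = min (f x) (max (g x) (h x))"
        using False unfolding a j MM_def JJ_def by auto
      have ex: "e x = max (min (f x) (g x)) (min (f x) (h x))"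
        using False unfolding e b c MM_def JJ_def by auto
      show ?thesis unfolding ax ex mm_distr ..
    qed
  qed
qed

definition phi :: "nat \<Rightarrow> nat \<Rightarrow> melem \<Rightarrow> melem \<Rightarrow> real" where
  "phi d n a x = (if x \<in> book_carrier d n \<and> book_le x a then 1 else 0)"

lemma phi_G: assumes "a \<in> LL d n" shows "phi d n a \<in> GG d n"
proof (rule G_intro)
  show "\<forall>x. x \<notin> LL d n \<longrightarrow> phi d n a x = 0" by (simp add: phi_def)
  show "\<forall>x\<in>LL d n. 0 \<le> phi d n a x \<and> phi d n a x \<le> 1" by (simp add: phi_def)
  fix s :: real assume s: "0 \<le> s" "s \<le> 1"
  show "\<exists>c\<in>LL d n. \<forall>x\<in>LL d n. s \<le> phi d n a x \<longleftrightarrow> book_le x c"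
  proof (cases "s = 0")
    case True
    then show ?thesis by (intro bexI[of _ Top]) (auto simp: phi_def)
  next
    case False
    then show ?thesis using s assms by (intro bexI[of _ a]) (auto simp: phi_def simp del: mem_L)
  qed
qed

lemma not_distrib_big: assumes "2 \<le> d" "3 \<le> n"
  shows "\<not> distributive_lattice_pw (GG d n)"
proof
  assume D: "distributive_lattice_pw (GG d n)"
  let ?P = "GG d n"
  have L: "A 1 \<in> LL d n" "A 2 \<in> LL d n" "A 3 \<in> LL d n" "u d \<in> LL d n" "Bot \<in> LL d n"
    using assms u_L by auto
  note G = phi_G[OF L(1)] phi_G[OF L(2)] phi_G[OF L(3)] phi_G[OF L(4)] phi_G[OF L(5)]
  have j: "is_lub_in ?P (phi d n (A 2)) (phi d n (A 3)) (phi d n (u d))"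
    unfolding is_lub_in_def
  proof (intro conjI ballI impI)
    show "phi d n (u d) \<in> ?P" by (rule G(4))
    show "pw_le (phi d n (A 2)) (phi d n (u d))" "pw_le (phi d n (A 3)) (phi d n (u d))"
      unfolding pw_le_def phi_def using le_trans A_le_u by auto
    fix k assume k: "k \<in> ?P" "pw_le (phi d n (A 2)) k \<and> pw_le (phi d n (A 3)) k"
    have "phi d n (A 2) (A 2) \<le> k (A 2)" "phi d n (A 3) (A 3) \<le> k (A 3)"
      using k(2) unfolding pw_le_def by blast+
    moreover have "phi d n (A 2) (A 2) = 1" "phi d n (A 3) (A 3) = 1" using L by (simp_all add: phi_def)
    ultimately have k2: "1 \<le> k (A 2)" "1 \<le> k (A 3)" by simp_all
    obtain z where z: "z \<in> LL d n" "\<forall>x\<in>LL d n. 1 \<le> k x \<longleftrightarrow> book_le x z"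
      using G_lvl[OF k(1), of 1] by auto
    have "book_le (A 2) z" "book_le (A 3) z" using z k2 L by (auto simp del: mem_L)
    then have uz: "\<And>x. book_le x (u d) \<Longrightarrow> book_le x z" using z(1) assms
      by (cases z) (auto simp: u_def intro: le_trans)
    show "pw_le (phi d n (u d)) k" unfolding pw_le_def
    proof
      fix x show "phi d n (u d) x \<le> k x"
      proof (cases "x \<in> LL d n \<and> book_le x (u d)")
        case True
        then show ?thesis using uz z by (auto simp: phi_def simp del: mem_L)
      next
        case False
        then have "phi d n (u d) x = 0" by (simp add: phi_def)
        moreover have "0 \<le> k x" using G_rng[OF k(1)] G_out[OF k(1)] by (cases "x \<in> LL d n") auto
        ultimately show ?thesis by simp
      qed
    qed
  qed
  have a: "is_glb_in ?P (phi d n (A 1)) (phi d n (u d)) (phi d n (A 1))"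
    unfolding is_glb_in_def using G A_le_u le_trans unfolding pw_le_def phi_def
    by auto
  have bc: "is_glb_in ?P (phi d n (A 1)) (phi d n (A i)) (phi d n Bot)" if "i \<noteq> 1" for i
    unfolding is_glb_in_def
  proof (intro conjI ballI impI)
    show "phi d n Bot \<in> ?P" by (rule G(5))
    show "pw_le (phi d n Bot) (phi d n (A 1))" "pw_le (phi d n Bot) (phi d n (A i))"
      unfolding pw_le_def phi_def by (auto simp: le_Bot)
    fix k assume k: "k \<in> ?P" "pw_le k (phi d n (A 1)) \<and> pw_le k (phi d n (A i))"
    show "pw_le k (phi d n Bot)" unfolding pw_le_def
    proof
      fix x
      have "k x \<le> phi d n (A 1) x" "k x \<le> phi d n (A i) x" using k(2) by (auto simp: pw_le_def)
      then show "k x \<le> phi d n Bot x" using that unfolding phi_def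
        by (cases x) (auto split: if_splits)
    qed
  qed
  have e: "is_lub_in ?P (phi d n Bot) (phi d n Bot) (phi d n Bot)"
    unfolding is_lub_in_def pw_le_def using G(5) by auto
  have D2: "\<forall>f\<in>?P. \<forall>g\<in>?P. \<forall>h\<in>?P. \<forall>j a b c e.
        is_lub_in ?P g h j \<and> is_glb_in ?P f j a \<and> is_glb_in ?P f g b \<and> is_glb_in ?P f h c \<and>
        is_lub_in ?P b c e \<longrightarrow> a = e" using D unfolding distributive_lattice_pw_def by (rule conjunct2)
  have "phi d n (A 1) = phi d n Bot"
    using D2[rule_format, OF G(1) G(2) G(3)] j a bc[of 2] bc[of 3] e by simp
  then have "phi d n (A 1) (A 1) = phi d n Bot (A 1)" by simp
  then show False using L by (simp add: phi_def)
qed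

theorem mainTheorem4:
  fixes d n :: nat
  assumes "2 \<le> d" and "1 \<le> n"
  shows "distributive_lattice_pw (Gamma (book_carrier d n) book_le) \<longleftrightarrow> n \<in> {1, 2}"
proof
  assume "distributive_lattice_pw (Gamma (book_carrier d n) book_le)"
  then have "\<not> 3 \<le> n" using not_distrib_big assms by blast
  then show "n \<in> {1, 2}" using assms by auto
next
  assume "n \<in> {1, 2}"
  then show "distributive_lattice_pw (Gamma (book_carrier d n) book_le)"
    using distrib_small assms by auto
qed

end
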